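(* Let $\{d_i,\mathcal F_i\}_{i=1}^n$ be a (real-valued) martingale difference sequence. Suppose $v_{i-1}$, $i\in[n]$, are positive $\mathcal F_{i-1}$-measurable random variables such that $\mathbb E[\exp(\lambda d_i)\mid\mathcal F_{i-1}]\le\exp\!\left(\frac{\lambda^2}{2}v_{i-1}\right)$ for all $i\in[n]$ and all $\lambda>0$. Let $S_t=\sum_{i=1}^t d_i$ and $V_t=\sum_{i=1}^t v_{i-1}$. Let $\alpha_i\ge0$ and $\alpha=\max_{i\in[n]}\alpha_i$. Then for all $x,\beta>0$, \[ \Pr\!\left[\bigcup_{t=1}^n\left\{S_t\ge x\ \text{and}\ V_t\le\sum_{i=1}^t\alpha_i d_i+\beta\right\}\right]\le\exp\!\left(-\frac{x}{4\alpha+8\beta/x}\right). \]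
   Context: $[n]=\{1,\dots,n\}$. *)

theory Defs
  imports "HOL-Probability.Probability"
begin

end

theory Submission imports Defs begin

lemma key_step:
  fixes G g h :: "'a \<Rightarrow> ennreal"
  assumes "prob_space M" "subalgebra M F" "G \<in> borel_measurable F"
    "g \<in> borel_measurable M" "AE \<omega> in M. nn_cond_exp M F g \<omega> \<le> h \<omega>"
  shows "(\<integral>\<^sup>+ \<omega>. G \<omega> * g \<omega> \<partial>M) \<le> (\<integral>\<^sup>+ \<omega>. G \<omega> * h \<omega> \<partial>M)"
proof -
  interpret prob_space M by fact
  interpret sigma_finite_subalgebra M F
    by (rule finite_measure_subalgebra_is_sigma_finite)
       (simp add: finite_measure_subalgebra_def finite_measure_subalgebra_axioms_def assms(2) finite_measure_axioms)
  have "(\<integral>\<^sup>+ \<omega>. G \<omega> * g \<omega> \<partial>M) = (\<integral>\<^sup>+ \<omega>. G \<omega> * nn_cond_exp M F g \<omega> \<partial>M)"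
    using nn_cond_exp_intg[OF assms(3,4)] by simp
  also have "\<dots> \<le> (\<integral>\<^sup>+ \<omega>. G \<omega> * h \<omega> \<partial>M)"
    by (rule nn_integral_mono_AE) (use assms(5) in \<open>auto elim!: eventually_mono intro: mult_left_mono\<close>)
  finally show ?thesis .
qed

lemma setA:
  fixes f g h :: "'a \<Rightarrow> real"
  assumes [measurable]: "f \<in> borel_measurable N" "g \<in> borel_measurable N" "h \<in> borel_measurable N"
  shows "{\<omega>\<in>space N. x \<le> f \<omega> \<and> g \<omega> \<le> h \<omega> + b} \<in> sets N"
  by measurable

theorem theorem3p3:
  fixes M :: "'a measure" and F :: "nat \<Rightarrow> 'a measure"
    and d v :: "nat \<Rightarrow> 'a \<Rightarrow> real" and alpha :: "nat \<Rightarrow> real"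
    and n :: nat and x \<beta> :: real
  assumes "prob_space M"
    and filt_sub: "\<And>i. i \<le> n \<Longrightarrow> subalgebra M (F i)"
    and filt_mono: "\<And>i j. i \<le> j \<Longrightarrow> j \<le> n \<Longrightarrow> sets (F i) \<subseteq> sets (F j)"
    and d_int: "\<And>i. i \<in> {1..n} \<Longrightarrow> integrable M (d i)"
    and d_adapted: "\<And>i. i \<in> {1..n} \<Longrightarrow> d i \<in> borel_measurable (F i)"
    and d_mds: "\<And>i. i \<in> {1..n} \<Longrightarrow> AE \<omega> in M. real_cond_exp M (F (i - 1)) (d i) \<omega> = 0"
    and v_meas: "\<And>i. i \<in> {1..n} \<Longrightarrow> v (i - 1) \<in> borel_measurable (F (i - 1))"
    and v_pos: "\<And>i \<omega>. i \<in> {1..n} \<Longrightarrow> \<omega> \<in> space M \<Longrightarrow> v (i - 1) \<omega> > 0"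
    and mgf: "\<And>i l. i \<in> {1..n} \<Longrightarrow> l > 0 \<Longrightarrow>
       AE \<omega> in M. nn_cond_exp M (F (i - 1)) (\<lambda>\<omega>'. ennreal (exp (l * d i \<omega>'))) \<omega>
                   \<le> ennreal (exp (l\<^sup>2 / 2 * v (i - 1) \<omega>))"
    and alpha_nonneg: "\<And>i. i \<in> {1..n} \<Longrightarrow> alpha i \<ge> 0"
    and "x > 0" and "\<beta> > 0"
  shows "measure M {\<omega> \<in> space M. \<exists>t\<in>{1..n}.
            (\<Sum>i=1..t. d i \<omega>) \<ge> x \<and>
            (\<Sum>i=1..t. v (i - 1) \<omega>) \<le> (\<Sum>i=1..t. alpha i * d i \<omega>) + \<beta>}
         \<le> exp (- x / (4 * Max (alpha ` {1..n}) + 8 * \<beta> / x))"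
proof (cases "n = 0")
  case True
  then show ?thesis by simp
next
  case False
  then have n1: "n \<ge> 1" by simp
  interpret P: prob_space M by fact
  define a where "a = Max (alpha ` {1..n})"
  have a_ge: "\<And>i. i \<in> {1..n} \<Longrightarrow> alpha i \<le> a"
    unfolding a_def by (rule Max_ge) auto
  have a_nn: "a \<ge> 0" using a_ge[of 1] alpha_nonneg[of 1] n1 by auto
  define D where "D = 4 * a * x + 8 * \<beta>"
  have D_pos: "D > 0" using a_nn \<open>x > 0\<close> \<open>\<beta> > 0\<close> unfolding D_def
    by (simp add: add_nonneg_pos)
  define lam where "lam = 2 * x / D"
  define mu where "mu = 2 * lam\<^sup>2"
  define l where "l i = lam + mu * alpha i" for i
  have lam_pos: "lam > 0" using D_pos \<open>x > 0\<close> unfolding lam_def by simp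
  have mu_nn: "mu \<ge> 0" unfolding mu_def by simp
  have l_pos: "\<And>i. i \<in> {1..n} \<Longrightarrow> l i > 0"
    using lam_pos mu_nn alpha_nonneg unfolding l_def by (simp add: add_pos_nonneg)
  have l_bound: "\<And>i. i \<in> {1..n} \<Longrightarrow> (l i)\<^sup>2 / 2 \<le> mu"
  proof -
    fix i assume i: "i \<in> {1..n}"
    have "4 * x * alpha i \<le> D" unfolding D_def
      proof -
      have "x * alpha i \<le> x * a" using a_ge[OF i] \<open>x > 0\<close> by (simp add: mult_left_mono)
      then show "4 * x * alpha i \<le> 4 * a * x + 8 * \<beta>" using \<open>\<beta> > 0\<close> by (simp add: algebra_simps)
    qed
    then have "2 * lam * alpha i \<le> 1" unfolding lam_def using D_pos by (simp add: field_simps)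
    then have "mu * alpha i \<le> lam" unfolding mu_def using lam_pos
      by (metis mult.commute mult.left_commute mult_left_mono less_imp_le mult.right_neutral power2_eq_square)
    then have "0 < l i" "l i \<le> 2 * lam" using l_pos[OF i] unfolding l_def by auto
    then have "(l i)\<^sup>2 \<le> (2 * lam)\<^sup>2" by (intro power_mono) auto
    then show "(l i)\<^sup>2 / 2 \<le> mu" unfolding mu_def by (simp add: power_mult_distrib)
  qed
  define c where "c = lam * x - mu * \<beta>"
  have c_bound: "exp (- c) \<le> exp (- x / (4 * Max (alpha ` {1..n}) + 8 * \<beta> / x))"
  proof -
    have eq: "x / (4 * Max (alpha ` {1..n}) + 8 * \<beta> / x) = x\<^sup>2 / D"
      unfolding D_def a_def[symmetric] using \<open>x > 0\<close> by (simp add: field_simps power2_eq_square)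
    have "c = x\<^sup>2 / D * (2 - 8 * \<beta> / D)"
      unfolding c_def mu_def lam_def using D_pos by (simp add: field_simps power2_eq_square)
    moreover have "8 * \<beta> / D \<le> 1" using D_pos a_nn \<open>x > 0\<close> unfolding D_def by simp
    moreover have "x\<^sup>2 / D \<ge> 0" using D_pos by simp
    ultimately have "c \<ge> x\<^sup>2 / D"
      by (metis mult.right_neutral mult_left_mono diff_ge_0_iff_ge le_diff_eq one_add_one add_le_cancel_left)
    then show ?thesis using eq by simp
  qed
  define A where "A t = {\<omega>\<in>space M. (\<Sum>i=1..t. d i \<omega>) \<ge> x \<and>
            (\<Sum>i=1..t. v (i - 1) \<omega>) \<le> (\<Sum>i=1..t. alpha i * d i \<omega>) + \<beta>}" for t
  define C where "C t = {\<omega>\<in>space M. \<forall>s\<in>{1..<t}. \<omega> \<notin> A s}" for t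
  define Z where "Z t \<omega> = (\<Sum>i=1..t. l i * d i \<omega> - (l i)\<^sup>2 / 2 * v (i - 1) \<omega>)" for t \<omega>
  define Q where "Q k \<omega> = (\<Sum>t=1..k. indicator (C t \<inter> A t) \<omega> * ennreal (exp (Z t \<omega>)))
      + indicator (C (Suc k)) \<omega> * ennreal (exp (Z k \<omega>))" for k \<omega>
  define E where "E = {\<omega> \<in> space M. \<exists>t\<in>{1..n}.
            (\<Sum>i=1..t. d i \<omega>) \<ge> x \<and>
            (\<Sum>i=1..t. v (i - 1) \<omega>) \<le> (\<Sum>i=1..t. alpha i * d i \<omega>) + \<beta>}"
  have Z_ge: "\<And>t \<omega>. t \<in> {1..n} \<Longrightarrow> \<omega> \<in> A t \<Longrightarrow> Z t \<omega> \<ge> c"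
  proof -
    fix t \<omega> assume t: "t \<in> {1..n}" and w: "\<omega> \<in> A t"
    have sp: "\<omega> \<in> space M" and S: "(\<Sum>i=1..t. d i \<omega>) \<ge> x"
      and V: "(\<Sum>i=1..t. v (i - 1) \<omega>) \<le> (\<Sum>i=1..t. alpha i * d i \<omega>) + \<beta>"
      using w unfolding A_def by auto
    have sub: "\<And>i. i \<in> {1..t} \<Longrightarrow> i \<in> {1..n}" using t by auto
    have vnn: "\<And>i. i \<in> {1..t} \<Longrightarrow> 0 \<le> v (i - 1) \<omega>"
      using v_pos sub sp by (meson less_imp_le)
    have Zeq: "Z t \<omega> = lam * (\<Sum>i=1..t. d i \<omega>) + mu * (\<Sum>i=1..t. alpha i * d i \<omega>)
        - (\<Sum>i=1..t. (l i)\<^sup>2 / 2 * v (i - 1) \<omega>)"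
      unfolding Z_def l_def by (simp add: sum_subtractf sum_distrib_left sum.distrib algebra_simps)
    have "(\<Sum>i=1..t. (l i)\<^sup>2 / 2 * v (i - 1) \<omega>) \<le> (\<Sum>i=1..t. mu * v (i - 1) \<omega>)"
      by (rule sum_mono, rule mult_right_mono) (use l_bound sub vnn in auto)
    also have "(\<Sum>i=1..t. mu * v (i - 1) \<omega>) = mu * (\<Sum>i=1..t. v (i - 1) \<omega>)"
      by (simp add: sum_distrib_left)
    finally have "Z t \<omega> \<ge> lam * (\<Sum>i=1..t. d i \<omega>) + mu * (\<Sum>i=1..t. alpha i * d i \<omega>)
        - mu * (\<Sum>i=1..t. v (i - 1) \<omega>)" using Zeq by linarith
    moreover have "lam * (\<Sum>i=1..t. d i \<omega>) \<ge> lam * x" using S lam_pos by simp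
    moreover have "mu * (\<Sum>i=1..t. v (i - 1) \<omega>) \<le> mu * (\<Sum>i=1..t. alpha i * d i \<omega>) + mu * \<beta>"
      using mult_left_mono[OF V mu_nn] by (simp add: distrib_left)
    ultimately show "Z t \<omega> \<ge> c" unfolding c_def by linarith
  qed
  have space_F: "\<And>k. k \<le> n \<Longrightarrow> space (F k) = space M"
    using filt_sub unfolding subalgebra_def by auto
  have lift: "\<And>i k (f::'a \<Rightarrow> real). i \<le> k \<Longrightarrow> k \<le> n \<Longrightarrow> f \<in> borel_measurable (F i) \<Longrightarrow> f \<in> borel_measurable (F k)"
  proof -
    fix i k and f :: "'a \<Rightarrow> real" assume "i \<le> k" "k \<le> n" "f \<in> borel_measurable (F i)"
    moreover have "subalgebra (F k) (F i)" unfolding subalgebra_def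
      using space_F filt_mono \<open>i \<le> k\<close> \<open>k \<le> n\<close> by auto
    ultimately show "f \<in> borel_measurable (F k)" using measurable_from_subalg by blast
  qed
  have toM: "\<And>k (f::'a \<Rightarrow> real). k \<le> n \<Longrightarrow> f \<in> borel_measurable (F k) \<Longrightarrow> f \<in> borel_measurable M"
  proof -
    fix k and f :: "'a \<Rightarrow> real" assume "k \<le> n" "f \<in> borel_measurable (F k)"
    then show "f \<in> borel_measurable M" using measurable_from_subalg[OF filt_sub[of k]] by blast
  qed
  have d_F: "\<And>i k. i \<in> {1..k} \<Longrightarrow> k \<le> n \<Longrightarrow> d i \<in> borel_measurable (F k)"
  proof -
    fix i k assume i: "i \<in> {1..k}" and k: "k \<le> n"
    then have "i \<in> {1..n}" "i \<le> k" by auto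
    then show "d i \<in> borel_measurable (F k)" using lift[OF _ k d_adapted] by blast
  qed
  have v_F: "\<And>i k. i \<in> {1..k} \<Longrightarrow> k \<le> n \<Longrightarrow> v (i - 1) \<in> borel_measurable (F k)"
  proof -
    fix i k assume "i \<in> {1..k}" "k \<le> n"
    then show "v (i - 1) \<in> borel_measurable (F k)"
    proof -
      assume "i \<in> {1..k}" "k \<le> n"
      then have "i \<in> {1..n}" "i - 1 \<le> k" by auto
      then show ?thesis using lift[OF _ \<open>k \<le> n\<close> v_meas] by blast
    qed
  qed
  have Z_F: "\<And>t k. t \<le> k \<Longrightarrow> k \<le> n \<Longrightarrow> Z t \<in> borel_measurable (F k)"
  proof -
    fix t k assume "t \<le> k" "k \<le> n"
    then have "\<And>i. i \<in> {1..t} \<Longrightarrow> d i \<in> borel_measurable (F k) \<and> v (i - 1) \<in> borel_measurable (F k)"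
      using d_F v_F by auto
    then show "Z t \<in> borel_measurable (F k)" unfolding Z_def
      by (intro borel_measurable_sum borel_measurable_diff borel_measurable_times borel_measurable_const) auto
  qed
  have A_F: "\<And>t k. t \<le> k \<Longrightarrow> k \<le> n \<Longrightarrow> A t \<in> sets (F k)"
  proof -
    fix t k assume "t \<le> k" "k \<le> n"
    then have m: "\<And>i. i \<in> {1..t} \<Longrightarrow> d i \<in> borel_measurable (F k) \<and> v (i - 1) \<in> borel_measurable (F k)"
      using d_F v_F by auto
    have "(\<lambda>\<omega>. \<Sum>i=1..t. d i \<omega>) \<in> borel_measurable (F k)"
      using m by (intro borel_measurable_sum) auto
    moreover have "(\<lambda>\<omega>. \<Sum>i=1..t. v (i - 1) \<omega>) \<in> borel_measurable (F k)"
      using m by (intro borel_measurable_sum) auto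
    moreover have "(\<lambda>\<omega>. \<Sum>i=1..t. alpha i * d i \<omega>) \<in> borel_measurable (F k)"
      using m by (intro borel_measurable_sum borel_measurable_times borel_measurable_const) auto
    ultimately have "{\<omega>\<in>space (F k). x \<le> (\<Sum>i=1..t. d i \<omega>) \<and>
       (\<Sum>i=1..t. v (i - 1) \<omega>) \<le> (\<Sum>i=1..t. alpha i * d i \<omega>) + \<beta>} \<in> sets (F k)"
      by (rule setA)
    then show "A t \<in> sets (F k)" unfolding A_def using space_F \<open>k \<le> n\<close> by simp
  qed
  have C_F: "\<And>k. k \<le> n \<Longrightarrow> C (Suc k) \<in> sets (F k)"
  proof -
    fix k assume k: "k \<le> n"
    have "C (Suc k) = space (F k) - (\<Union>s\<in>{1..k}. A s)"
      unfolding C_def using space_F[OF k] by auto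
    also have "\<dots> \<in> sets (F k)"
      by (intro sets.Diff sets.top sets.finite_UN finite_atLeastAtMost) (use A_F k in auto)
    finally show "C (Suc k) \<in> sets (F k)" .
  qed
  have setsM: "\<And>k S. k \<le> n \<Longrightarrow> S \<in> sets (F k) \<Longrightarrow> S \<in> sets M"
    using filt_sub unfolding subalgebra_def by auto
  have C_M: "\<And>t. t \<le> n \<Longrightarrow> C t \<in> sets M"
  proof -
    fix t assume "t \<le> n"
    show "C t \<in> sets M"
    proof (cases t)
      case 0
      then show ?thesis unfolding C_def by simp
    next
      case (Suc k)
      then show ?thesis using C_F[of k] setsM[of k] \<open>t \<le> n\<close> by auto
    qed
  qed
  have A_M: "\<And>t. t \<le> n \<Longrightarrow> A t \<in> sets M" using A_F setsM by blast
  have Z_M: "\<And>t. t \<le> n \<Longrightarrow> Z t \<in> borel_measurable M" using Z_F toM by blast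
  have E_meas: "E \<in> sets M"
  proof -
    have eq: "E = (\<Union>t\<in>{1..n}. A t)" unfolding E_def A_def by auto
    have "(\<Union>t\<in>{1..n}. A t) \<in> sets M"
      by (rule sets.finite_UN) (use A_M in auto)
    then show ?thesis unfolding eq .
  qed
  have Q_meas: "\<And>k. k \<le> n \<Longrightarrow> Q k \<in> borel_measurable M"
  proof -
    fix k assume k: "k \<le> n"
    have CS: "C (Suc k) \<in> sets M"
      using C_F[OF k] setsM[OF k] by blast
    have eZ: "\<And>t. t \<le> n \<Longrightarrow> (\<lambda>\<omega>. ennreal (exp (Z t \<omega>))) \<in> borel_measurable M"
    proof -
      fix t assume "t \<le> n"
      then have [measurable]: "Z t \<in> borel_measurable M" using Z_M by blast
      show "(\<lambda>\<omega>. ennreal (exp (Z t \<omega>))) \<in> borel_measurable M" by measurable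
    qed
    have trm: "\<And>t. t \<in> {1..k} \<Longrightarrow> (\<lambda>\<omega>. indicator (C t \<inter> A t) \<omega> * ennreal (exp (Z t \<omega>))) \<in> borel_measurable M"
    proof -
      fix t assume "t \<in> {1..k}"
      then have tn: "t \<le> n" using k by auto
      have [measurable]: "C t \<inter> A t \<in> sets M" using C_M[OF tn] A_M[OF tn] by blast
      have [measurable]: "(\<lambda>\<omega>. ennreal (exp (Z t \<omega>))) \<in> borel_measurable M" using eZ[OF tn] .
      show "(\<lambda>\<omega>. indicator (C t \<inter> A t) \<omega> * ennreal (exp (Z t \<omega>))) \<in> borel_measurable M" by measurable
    qed
    have [measurable]: "(\<lambda>\<omega>. ennreal (exp (Z k \<omega>))) \<in> borel_measurable M" using eZ[OF k] .
    have [measurable]: "C (Suc k) \<in> sets M" using CS .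
    have [measurable]: "(\<lambda>\<omega>. \<Sum>t=1..k. indicator (C t \<inter> A t) \<omega> * ennreal (exp (Z t \<omega>))) \<in> borel_measurable M"
      by (rule borel_measurable_sum) (rule trm)
    show "Q k \<in> borel_measurable M" unfolding Q_def by measurable
  qed
  define T where "T k \<omega> = (\<Sum>t=1..k. indicator (C t \<inter> A t) \<omega> * ennreal (exp (Z t \<omega>)))" for k \<omega>
  have T_meas: "\<And>k. k \<le> n \<Longrightarrow> T k \<in> borel_measurable M"
  proof -
    fix k assume k: "k \<le> n"
    have trm: "\<And>t. t \<in> {1..k} \<Longrightarrow> (\<lambda>\<omega>. indicator (C t \<inter> A t) \<omega> * ennreal (exp (Z t \<omega>))) \<in> borel_measurable M"
    proof -
      fix t assume "t \<in> {1..k}"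
      then have tn: "t \<le> n" using k by auto
      have [measurable]: "C t \<inter> A t \<in> sets M" using C_M[OF tn] A_M[OF tn] by blast
      have [measurable]: "Z t \<in> borel_measurable M" using Z_M[OF tn] .
      show "(\<lambda>\<omega>. indicator (C t \<inter> A t) \<omega> * ennreal (exp (Z t \<omega>))) \<in> borel_measurable M" by measurable
    qed
    show "T k \<in> borel_measurable M" unfolding T_def
      by (rule borel_measurable_sum) (rule trm)
  qed
  have Q_step: "\<And>k. Suc k \<le> n \<Longrightarrow> (\<integral>\<^sup>+ \<omega>. Q (Suc k) \<omega> \<partial>M) \<le> (\<integral>\<^sup>+ \<omega>. Q k \<omega> \<partial>M)"
  proof -
    fix k assume k: "Suc k \<le> n"
    then have k': "k \<le> n" by simp
    have Sk: "Suc k \<in> {1..n}" using k by simp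
    define L where "L = l (Suc k)"
    have L_pos: "L > 0" unfolding L_def using l_pos[OF Sk] .
    have CF[measurable]: "C (Suc k) \<in> sets (F k)" using C_F[OF k'] .
    have CM[measurable]: "C (Suc k) \<in> sets M" using setsM[OF k' CF] .
    have ZF[measurable]: "Z k \<in> borel_measurable (F k)" using Z_F[of k k] k' by simp
    have ZM[measurable]: "Z k \<in> borel_measurable M" using Z_M[OF k'] .
    have ZM2[measurable]: "Z (Suc k) \<in> borel_measurable M" using Z_M[OF k] .
    have vF[measurable]: "v k \<in> borel_measurable (F k)" using v_meas[OF Sk] by simp
    have dM[measurable]: "d (Suc k) \<in> borel_measurable M" using d_adapted[OF Sk] filt_sub[OF k] measurable_from_subalg by blast
    have TM[measurable]: "T k \<in> borel_measurable M" using T_meas[OF k'] .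
    have Zs: "\<And>\<omega>. Z (Suc k) \<omega> = (Z k \<omega> - L\<^sup>2 / 2 * v k \<omega>) + L * d (Suc k) \<omega>"
      unfolding Z_def L_def by simp
    define G where "G \<omega> = indicator (C (Suc k)) \<omega> * ennreal (exp (Z k \<omega> - L\<^sup>2 / 2 * v k \<omega>))" for \<omega>
    have GF: "G \<in> borel_measurable (F k)" unfolding G_def by measurable
    have ineq: "(\<integral>\<^sup>+ \<omega>. G \<omega> * ennreal (exp (L * d (Suc k) \<omega>)) \<partial>M)
        \<le> (\<integral>\<^sup>+ \<omega>. G \<omega> * ennreal (exp (L\<^sup>2 / 2 * v k \<omega>)) \<partial>M)"
      by (rule key_step[OF \<open>prob_space M\<close> filt_sub[OF k'] GF])
         (measurable, use mgf[OF Sk L_pos] in simp)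
    have e1: "\<And>\<omega>. G \<omega> * ennreal (exp (L * d (Suc k) \<omega>)) = indicator (C (Suc k)) \<omega> * ennreal (exp (Z (Suc k) \<omega>))"
      unfolding G_def Zs by (simp add: exp_add ennreal_mult mult.assoc)
    have e2: "\<And>\<omega>. G \<omega> * ennreal (exp (L\<^sup>2 / 2 * v k \<omega>)) = indicator (C (Suc k)) \<omega> * ennreal (exp (Z k \<omega>))"
      unfolding G_def by (simp add: exp_diff ennreal_mult[symmetric] mult.assoc del: ennreal_mult)
    have QS: "\<And>\<omega>. \<omega> \<in> space M \<Longrightarrow> Q (Suc k) \<omega> = T k \<omega> + indicator (C (Suc k)) \<omega> * ennreal (exp (Z (Suc k) \<omega>))"
    proof -
      fix \<omega> assume sp: "\<omega> \<in> space M"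
      have CC: "C (Suc (Suc k)) = C (Suc k) - A (Suc k)" unfolding C_def
        by (auto simp: less_Suc_eq)
      show "Q (Suc k) \<omega> = T k \<omega> + indicator (C (Suc k)) \<omega> * ennreal (exp (Z (Suc k) \<omega>))"
        unfolding Q_def T_def CC by (simp add: indicator_def)
    qed
    have Qk: "\<And>\<omega>. Q k \<omega> = T k \<omega> + indicator (C (Suc k)) \<omega> * ennreal (exp (Z k \<omega>))"
      unfolding Q_def T_def by simp
    have "(\<integral>\<^sup>+ \<omega>. Q (Suc k) \<omega> \<partial>M) = (\<integral>\<^sup>+ \<omega>. T k \<omega> + indicator (C (Suc k)) \<omega> * ennreal (exp (Z (Suc k) \<omega>)) \<partial>M)"
      by (rule nn_integral_cong) (rule QS)
    also have "\<dots> = (\<integral>\<^sup>+ \<omega>. T k \<omega> \<partial>M) + (\<integral>\<^sup>+ \<omega>. indicator (C (Suc k)) \<omega> * ennreal (exp (Z (Suc k) \<omega>)) \<partial>M)"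
      by (rule nn_integral_add) measurable
    also have "(\<integral>\<^sup>+ \<omega>. indicator (C (Suc k)) \<omega> * ennreal (exp (Z (Suc k) \<omega>)) \<partial>M)
        \<le> (\<integral>\<^sup>+ \<omega>. indicator (C (Suc k)) \<omega> * ennreal (exp (Z k \<omega>)) \<partial>M)"
      using ineq unfolding e1 e2 .
    also have "(\<integral>\<^sup>+ \<omega>. T k \<omega> \<partial>M) + (\<integral>\<^sup>+ \<omega>. indicator (C (Suc k)) \<omega> * ennreal (exp (Z k \<omega>)) \<partial>M)
        = (\<integral>\<^sup>+ \<omega>. Q k \<omega> \<partial>M)"
      unfolding Qk by (rule nn_integral_add[symmetric]) measurable
    finally show "(\<integral>\<^sup>+ \<omega>. Q (Suc k) \<omega> \<partial>M) \<le> (\<integral>\<^sup>+ \<omega>. Q k \<omega> \<partial>M)"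
      by (simp add: add_left_mono)
  qed
  have Q0: "(\<integral>\<^sup>+ \<omega>. Q 0 \<omega> \<partial>M) = 1"
  proof -
    have "(\<integral>\<^sup>+ \<omega>. Q 0 \<omega> \<partial>M) = (\<integral>\<^sup>+ \<omega>. 1 \<partial>M)"
      by (rule nn_integral_cong) (simp add: Q_def Z_def C_def)
    then show ?thesis by (simp add: P.emeasure_space_1)
  qed
  have Q_int: "\<And>k. k \<le> n \<Longrightarrow> (\<integral>\<^sup>+ \<omega>. Q k \<omega> \<partial>M) \<le> 1"
  proof -
    fix k show "k \<le> n \<Longrightarrow> (\<integral>\<^sup>+ \<omega>. Q k \<omega> \<partial>M) \<le> 1"
    proof (induction k)
      case 0
      then show ?case using Q0 by simp
    next
      case (Suc k)
      then show ?case using Q_step[of k] by (meson Suc_leD order_trans)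
    qed
  qed
  have E_Q: "\<And>\<omega>. \<omega> \<in> space M \<Longrightarrow> ennreal (exp c) * indicator E \<omega> \<le> Q n \<omega>"
  proof -
    fix \<omega> assume sp: "\<omega> \<in> space M"
    show "ennreal (exp c) * indicator E \<omega> \<le> Q n \<omega>"
    proof (cases "\<omega> \<in> E")
      case False
      then show ?thesis by simp
    next
      case True
      define P where "P t = (t \<in> {1..n} \<and> \<omega> \<in> A t)" for t
      have ex: "\<exists>t. P t" using True sp unfolding E_def A_def P_def by auto
      define t0 where "t0 = (LEAST t. P t)"
      have Pt0: "P t0" unfolding t0_def using ex by (metis LeastI)
      have notP: "\<And>s. s < t0 \<Longrightarrow> \<not> P s" unfolding t0_def by (rule not_less_Least)
      have t0: "t0 \<in> {1..n}" "\<omega> \<in> A t0" using Pt0 unfolding P_def by auto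
      have "\<omega> \<in> C t0" unfolding C_def using sp notP t0 unfolding P_def by auto
      then have "ennreal (exp c) \<le> indicator (C t0 \<inter> A t0) \<omega> * ennreal (exp (Z t0 \<omega>))"
        using t0 Z_ge[OF t0] by simp
      also have "\<dots> \<le> (\<Sum>t=1..n. indicator (C t \<inter> A t) \<omega> * ennreal (exp (Z t \<omega>)))"
        by (rule member_le_sum) (use t0 in auto)
      also have "\<dots> \<le> Q n \<omega>" unfolding Q_def by simp
      finally show ?thesis using True by simp
    qed
  qed
  have "ennreal (exp c) * emeasure M E = (\<integral>\<^sup>+ \<omega>. ennreal (exp c) * indicator E \<omega> \<partial>M)"
    using E_meas by (simp add: nn_integral_cmult_indicator)
  also have "\<dots> \<le> (\<integral>\<^sup>+ \<omega>. Q n \<omega> \<partial>M)"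
    by (rule nn_integral_mono) (use E_Q in auto)
  also have "\<dots> \<le> 1" using Q_int by simp
  finally have "ennreal (exp c) * emeasure M E \<le> 1" .
  then have "exp c * measure M E \<le> 1"
    by (simp add: P.emeasure_eq_measure ennreal_mult'[symmetric] del: ennreal_mult')
  then have "measure M E \<le> exp (- c)"
    by (simp add: exp_minus field_simps)
  then show ?thesis using c_bound unfolding E_def by linarith
qed

end
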